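(* Let $1\le p<\infty$ and $g\in H(\mathbb{D})$. Then the Volterra type operator $T_g: S_2^p\to S_2^p$, $T_gf(z)=\int_0^z f(w)g'(w)\,dw$, is bounded if and only if $g\in S_2^p$.
   Context: $\mathbb{D}$ is the open unit disc, $H(\mathbb{D})$ the space of analytic functions on $\mathbb{D}$. For $1\le p<\infty$, $H^p$ is the Hardy space of $f\in H(\mathbb{D})$ with $\|f\|_{H^p}^p=\sup_{0<r<1}\frac{1}{2\pi}\int_0^{2\pi}|f(re^{i\theta})|^p\,d\theta<\infty$. $S_2^p=\{f\in H(\mathbb{D}): f''\in H^p\}$ with norm $\|f\|_{S_2^p}=|f(0)|+|f'(0)|+\|f''\|_{H^p}$. *)

theory Defs
  imports "HOL-Complex_Analysis.Complex_Analysis"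
begin

definition hardy_mean :: "real \<Rightarrow> (complex \<Rightarrow> complex) \<Rightarrow> real \<Rightarrow> real" where
  "hardy_mean p f r = (1 / (2 * pi)) * integral {0..2*pi} (\<lambda>t. norm (f (of_real r * cis t)) powr p)"

definition in_Hardy :: "real \<Rightarrow> (complex \<Rightarrow> complex) \<Rightarrow> bool" where
  "in_Hardy p f \<longleftrightarrow> f holomorphic_on ball 0 1 \<and> bdd_above (hardy_mean p f ` {0<..<1})"

definition Hardy_norm :: "real \<Rightarrow> (complex \<Rightarrow> complex) \<Rightarrow> real" where
  "Hardy_norm p f = (SUP r\<in>{0<..<1}. hardy_mean p f r) powr (1 / p)"

definition in_S2 :: "real \<Rightarrow> (complex \<Rightarrow> complex) \<Rightarrow> bool" where
  "in_S2 p f \<longleftrightarrow> f holomorphic_on ball 0 1 \<and> in_Hardy p (deriv (deriv f))"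

definition S2_norm :: "real \<Rightarrow> (complex \<Rightarrow> complex) \<Rightarrow> real" where
  "S2_norm p f = norm (f 0) + norm (deriv f 0) + Hardy_norm p (deriv (deriv f))"

definition volterra :: "(complex \<Rightarrow> complex) \<Rightarrow> (complex \<Rightarrow> complex) \<Rightarrow> complex \<Rightarrow> complex" where
  "volterra g f z = contour_integral (linepath 0 z) (\<lambda>w. f w * deriv g w)"

end

theory Submission
  imports Defs
begin


lemma young_pow:
  fixes x l p :: real
  assumes "0 \<le> x" "0 < l" "1 \<le> p"
  shows "x \<le> l + l powr (1-p) * x powr p"
proof (cases "x \<le> l")
  case True
  have "0 \<le> l powr (1-p) * x powr p" by simp
  thus ?thesis using True by linarith
next
  case False
  hence xl: "1 \<le> x / l" using assms by simp
  have "1 \<le> (x/l) powr (p-1)" using xl assms by (simp add: ge_one_powr_ge_zero)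
  hence "x \<le> x * (x/l) powr (p-1)" using assms False by (simp add: mult_le_cancel_left1)
  also have "x * (x/l) powr (p-1) = l powr (1-p) * x powr p"
    using assms False by (simp add: powr_divide powr_diff powr_minus divide_simps)
  finally show ?thesis using assms by (smt (verit) powr_ge_zero mult_nonneg_nonneg)
qed

lemma le_eps_zero:
  fixes x c :: real
  assumes "\<And>l. 0 < l \<Longrightarrow> x \<le> l * c"
  shows "x \<le> 0"
proof (rule ccontr)
  assume "\<not> x \<le> 0"
  hence x: "x > 0" by simp
  show False
  proof (cases "c \<le> 0")
    case True then show False using assms[of 1] x by simp
  next
    case False
    have "x \<le> (x / (2*c)) * c" using assms[of "x/(2*c)"] x False by simp
    also have "\<dots> = x/2" using False by simp
    finally show False using x by simp
  qed
qed

lemma circ_cont: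
  assumes "h holomorphic_on ball 0 1" "0 \<le> r" "r < 1"
  shows "continuous_on S (\<lambda>t. h (of_real r * cis t))"
proof -
  have "continuous_on (ball 0 1) h" using assms(1) holomorphic_on_imp_continuous_on by blast
  moreover have "continuous_on S (\<lambda>t. of_real r * cis t)" by (intro continuous_intros)
  moreover have "(\<lambda>t. of_real r * cis t) ` S \<subseteq> ball 0 1" using assms by (auto simp: norm_mult)
  ultimately show ?thesis using continuous_on_compose2 by blast
qed

lemma circ_norm_powr_cont:
  assumes "h holomorphic_on ball 0 1" "0 \<le> r" "r < 1" "0 < p"
  shows "continuous_on S (\<lambda>t. norm (h (of_real r * cis t)) powr p)"
  using assms by (intro continuous_on_powr' continuous_intros circ_cont[OF assms(1-3)]) auto

lemma hardy_int:
  assumes "h holomorphic_on ball 0 1" "0 \<le> r" "r < 1" "0 < p"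
  shows "((\<lambda>t. norm (h (of_real r * cis t)) powr p) has_integral (2*pi*hardy_mean p h r)) {0..2*pi}"
proof -
  have "(\<lambda>t. norm (h (of_real r * cis t)) powr p) integrable_on {0..2*pi}"
    by (rule integrable_continuous_interval[OF circ_norm_powr_cont[OF assms]])
  thus ?thesis unfolding hardy_mean_def by (simp add: has_integral_iff)
qed

lemma avg_bound:
  assumes h: "h holomorphic_on ball 0 1" and p: "1 \<le> p" and k: "0 \<le> k"
    and hb: "hardy_mean p h R \<le> k powr p" and R: "0 \<le> R" "R < 1"
  shows "integral {0..2*pi} (\<lambda>t. norm (h (of_real R * cis t))) \<le> 2*pi*(2*k)"
proof -
  have i1: "(\<lambda>t. norm (h (of_real R * cis t))) integrable_on {0..2*pi}"
    by (rule integrable_continuous_interval) (intro continuous_intros circ_cont[OF h R])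
  have ip: "((\<lambda>t. norm (h (of_real R * cis t)) powr p) has_integral (2*pi*hardy_mean p h R)) {0..2*pi}"
    using hardy_int[OF h R] p by simp
  have key: "integral {0..2*pi} (\<lambda>t. norm (h (of_real R * cis t))) \<le> 2*pi*l + l powr (1-p) * (2*pi*k powr p)"
    if l: "0 < l" for l
  proof -
    have "((\<lambda>t. l + l powr (1-p) * norm (h (of_real R * cis t)) powr p) has_integral
          (l * (2*pi - 0) + l powr (1-p) * (2*pi*hardy_mean p h R))) {0..2*pi}"
      by (intro has_integral_add has_integral_mult_right ip) (use has_integral_const_real[of l 0 "2*pi"] in \<open>simp add: mult.commute\<close>)
    hence "integral {0..2*pi} (\<lambda>t. norm (h (of_real R * cis t))) \<le> l * (2*pi - 0) + l powr (1-p) * (2*pi*hardy_mean p h R)"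
      using i1 by (intro has_integral_le[OF integrable_integral[OF i1]]) (auto intro!: young_pow l p)
    also have "\<dots> \<le> 2*pi*l + l powr (1-p) * (2*pi*k powr p)"
      using hb by (simp add: mult_left_mono)
    finally show ?thesis .
  qed
  show ?thesis
  proof (cases "k = 0")
    case True
    have "integral {0..2*pi} (\<lambda>t. norm (h (of_real R * cis t))) \<le> 0"
      by (rule le_eps_zero[of _ "2*pi"]) (use key True in \<open>auto simp: mult.commute\<close>)
    thus ?thesis using True by simp
  next
    case False
    hence kp: "k > 0" using k by simp
    have "k powr (1-p) * k powr p = k" using kp by (simp add: powr_add[symmetric])
    thus ?thesis using key[OF kp] by (simp add: algebra_simps)
  qed
qed




lemma pointwise_bound:
  assumes h: "h holomorphic_on ball 0 1" and p: "1 \<le> p" and k: "0 \<le> k"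
    and hb: "\<And>R. 0 < R \<Longrightarrow> R < 1 \<Longrightarrow> hardy_mean p h R \<le> k powr p" and w: "norm w < 1"
  shows "norm (h w) \<le> 4*k/(1 - norm w)"
proof -
  define \<rho> where "\<rho> = norm w"
  define R where "R = (1+\<rho>)/2"
  have \<rho>: "0 \<le> \<rho>" "\<rho> < 1" using w by (auto simp: \<rho>_def)
  have R: "0 < R" "R < 1" "\<rho> < R" using \<rho> by (auto simp: R_def)
  have "cball 0 R \<subseteq> ball (0::complex) 1" using R by auto
  hence hc: "h holomorphic_on cball 0 R" using h holomorphic_on_subset by blast
  have "((\<lambda>u. h u/(u-w)) has_contour_integral (2 * of_real pi * \<i> * h w)) (circlepath 0 R)"
    by (rule Cauchy_integral_circlepath_simple[OF hc]) (use R in \<open>simp add: \<rho>_def\<close>)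
  hence hi: "((\<lambda>t. h (of_real R * cis t)/(of_real R * cis t - w) * of_real R * \<i> * cis t) has_integral
             (2 * of_real pi * \<i> * h w)) {0..2*pi}"
    unfolding circlepath_def by (subst (asm) has_contour_integral_part_circlepath_iff) auto
  have cont: "continuous_on {0..2*pi} (\<lambda>t. norm (h (of_real R * cis t)) * (R/(R-\<rho>)))"
    by (intro continuous_intros circ_cont[OF h]) (use R in auto)
  have "norm (2 * of_real pi * \<i> * h w) \<le> integral {0..2*pi} (\<lambda>t. norm (h (of_real R * cis t)) * (R/(R-\<rho>)))"
  proof -
    have "norm (integral {0..2*pi} (\<lambda>t. h (of_real R * cis t)/(of_real R * cis t - w) * of_real R * \<i> * cis t))
       \<le> integral {0..2*pi} (\<lambda>t. norm (h (of_real R * cis t)) * (R/(R-\<rho>)))"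
    proof (rule integral_norm_bound_integral)
      show "(\<lambda>t. h (of_real R * cis t)/(of_real R * cis t - w) * of_real R * \<i> * cis t) integrable_on {0..2*pi}"
        using hi by blast
      show "(\<lambda>t. norm (h (of_real R * cis t)) * (R/(R-\<rho>))) integrable_on {0..2*pi}"
        by (rule integrable_continuous_interval[OF cont])
    next
      fix t
      have "R - \<rho> \<le> norm (of_real R * cis t - w)"
        using norm_triangle_ineq2[of "of_real R * cis t" w] R by (simp add: norm_mult \<rho>_def)
      moreover have "R - \<rho> > 0" using R by simp
      ultimately have "norm (h (of_real R * cis t)) / norm (of_real R * cis t - w) \<le> norm (h (of_real R * cis t)) / (R - \<rho>)"
        by (intro divide_left_mono mult_pos_pos) auto
      hence "norm (h (of_real R * cis t)) / norm (of_real R * cis t - w) * R \<le> norm (h (of_real R * cis t)) / (R - \<rho>) * R"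
        using R by (intro mult_right_mono) auto
      moreover have "norm (h (of_real R * cis t)/(of_real R * cis t - w) * of_real R * \<i> * cis t)
          = norm (h (of_real R * cis t)) / norm (of_real R * cis t - w) * R"
        using R by (simp add: norm_mult norm_divide)
      ultimately show "norm (h (of_real R * cis t)/(of_real R * cis t - w) * of_real R * \<i> * cis t) \<le> norm (h (of_real R * cis t)) * (R/(R-\<rho>))"
        by simp
    qed
    thus ?thesis using hi by (simp add: integral_unique)
  qed
  also have "\<dots> = (R/(R-\<rho>)) * integral {0..2*pi} (\<lambda>t. norm (h (of_real R * cis t)))"
    by (simp add: mult.commute)
  also have "\<dots> \<le> (R/(R-\<rho>)) * (2*pi*(2*k))"
    by (intro mult_left_mono avg_bound[OF h p k hb]) (use R in auto)
  also have "(R/(R-\<rho>)) * (2*pi*(2*k)) = (2*pi) * ((R/(R-\<rho>)) * (2*k))" by simp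
  finally have "(2*pi)*norm (h w) \<le> (2*pi) * ((R/(R-\<rho>)) * (2*k))" by (simp add: norm_mult)
  hence "norm (h w) \<le> (R/(R-\<rho>)) * (2*k)" by (rule mult_left_le_imp_le) simp
  also have "R/(R-\<rho>) = (1+\<rho>)/(1-\<rho>)" using R by (simp add: R_def field_simps)
  also have "(1+\<rho>)/(1-\<rho>) * (2*k) \<le> 2/(1-\<rho>) * (2*k)"
    using \<rho> k by (intro mult_right_mono divide_right_mono) auto
  finally show ?thesis by (simp add: \<rho>_def)
qed




lemma rad_cont:
  assumes "h holomorphic_on ball 0 1" "r < 1"
  shows "continuous_on {0..r} (\<lambda>s. h (of_real s * cis t))"
proof -
  have "continuous_on (ball 0 1) h" using assms(1) holomorphic_on_imp_continuous_on by blast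
  moreover have "continuous_on {0..r} (\<lambda>s. of_real s * cis t)" by (intro continuous_intros)
  moreover have "(\<lambda>s. of_real s * cis t) ` {0..r} \<subseteq> ball 0 1" using assms by (auto simp: norm_mult)
  ultimately show ?thesis using continuous_on_compose2 by blast
qed

lemma radial:
  assumes h: "\<phi> holomorphic_on ball 0 1" and r: "0 \<le> r" "r < 1"
  shows "norm (\<phi> (of_real r * cis t)) \<le> norm (\<phi> 0) + integral {0..r} (\<lambda>s. norm (deriv \<phi> (of_real s * cis t)))"
proof -
  have d: "((\<lambda>s. \<phi> (of_real s * cis t)) has_vector_derivative (deriv \<phi> (of_real s * cis t) * cis t)) (at s within {0..r})"
    if s: "s \<in> {0..r}" for s
  proof -
    have "((\<lambda>s. of_real s * cis t) has_vector_derivative cis t) (at s)"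
      by (auto intro!: derivative_eq_intros simp: has_vector_derivative_def scaleR_conv_of_real)
    moreover have "(\<phi> has_field_derivative deriv \<phi> (of_real s * cis t)) (at (of_real s * cis t))"
      by (rule holomorphic_derivI[OF h]) (use s r in \<open>auto simp: norm_mult\<close>)
    ultimately have "((\<phi> \<circ> (\<lambda>s. of_real s * cis t)) has_vector_derivative (cis t * deriv \<phi> (of_real s * cis t))) (at s)"
      by (rule field_vector_diff_chain_at)
    thus ?thesis by (auto simp: o_def mult.commute intro: has_vector_derivative_at_within)
  qed
  have ftc: "((\<lambda>s. deriv \<phi> (of_real s * cis t) * cis t) has_integral (\<phi> (of_real r * cis t) - \<phi> (of_real 0 * cis t))) {0..r}"
    by (rule fundamental_theorem_of_calculus[OF r(1) d])
  have hd: "deriv \<phi> holomorphic_on ball 0 1" by (rule holomorphic_deriv[OF h]) simp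
  have "norm (\<phi> (of_real r * cis t) - \<phi> 0) \<le> integral {0..r} (\<lambda>s. norm (deriv \<phi> (of_real s * cis t)))"
  proof -
    have "norm (integral {0..r} (\<lambda>s. deriv \<phi> (of_real s * cis t) * cis t)) \<le> integral {0..r} (\<lambda>s. norm (deriv \<phi> (of_real s * cis t)))"
      by (rule integral_norm_bound_integral)
        (use ftc in \<open>auto intro!: integrable_continuous_interval continuous_intros rad_cont[OF hd r(2)] simp: norm_mult\<close>)
    moreover have "integral {0..r} (\<lambda>s. deriv \<phi> (of_real s * cis t) * cis t) = \<phi> (of_real r * cis t) - \<phi> 0"
      using integral_unique[OF ftc] by simp
    ultimately show ?thesis by simp
  qed
  thus ?thesis using norm_triangle_ineq2[of "\<phi> (of_real r * cis t)" "\<phi> 0"] by linarith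
qed

lemma polar_ball: "norm w < 1 \<Longrightarrow> w = of_real (norm w) * cis (Arg w)"
  using rcis_cmod_Arg[of w] by (simp add: rcis_def)

lemma log_bound:
  assumes h: "\<phi> holomorphic_on ball 0 1" and K: "0 \<le> K"
    and b: "\<And>w. norm w < 1 \<Longrightarrow> norm (deriv \<phi> w) \<le> K/(1 - norm w)" and w: "norm w < 1"
  shows "norm (\<phi> w) \<le> norm (\<phi> 0) + K * (- ln (1 - norm w))"
proof -
  define r where "r = norm w"
  define t where "t = Arg w"
  have r: "0 \<le> r" "r < 1" using w by (auto simp: r_def)
  have hd: "deriv \<phi> holomorphic_on ball 0 1" by (rule holomorphic_deriv[OF h]) simp
  have ftc: "((\<lambda>s. K/(1-s)) has_integral (K * (- ln (1 - r)) - K * (- ln (1 - 0)))) {0..r}"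
  proof (rule fundamental_theorem_of_calculus[OF r(1)])
    fix s assume s: "s \<in> {0..r}"
    hence "s < 1" using r by auto
    thus "((\<lambda>s. K * (- ln (1 - s))) has_vector_derivative K/(1-s)) (at s within {0..r})"
      by (auto intro!: derivative_eq_intros simp: has_real_derivative_iff_has_vector_derivative[symmetric] field_simps)
  qed
  have "integral {0..r} (\<lambda>s. norm (deriv \<phi> (of_real s * cis t))) \<le> integral {0..r} (\<lambda>s. K/(1-s))"
  proof (rule integral_le)
    show "(\<lambda>s. norm (deriv \<phi> (of_real s * cis t))) integrable_on {0..r}"
      by (intro integrable_continuous_interval continuous_intros rad_cont[OF hd r(2)])
    show "(\<lambda>s. K/(1-s)) integrable_on {0..r}" using ftc by blast
    fix s assume s: "s \<in> {0..r}"
    hence "norm (of_real s * cis t) = s" "s < 1" using r by (auto simp: norm_mult)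
    thus "norm (deriv \<phi> (of_real s * cis t)) \<le> K/(1-s)" using b[of "of_real s * cis t"] by simp
  qed
  also have "\<dots> = K * (- ln (1 - r))" using ftc by (simp add: integral_unique)
  finally have "norm (\<phi> (of_real r * cis t)) \<le> norm (\<phi> 0) + K * (- ln (1 - r))"
    using radial[OF h r, of t] by linarith
  thus ?thesis using polar_ball[OF w] by (simp add: r_def t_def)
qed

lemma bdd_bound:
  assumes h: "\<phi> holomorphic_on ball 0 1" and K: "0 \<le> K" and A: "0 \<le> A"
    and b: "\<And>w. norm w < 1 \<Longrightarrow> norm (deriv \<phi> w) \<le> A + K * (- ln (1 - norm w))" and w: "norm w < 1"
  shows "norm (\<phi> w) \<le> norm (\<phi> 0) + A + K"
proof -
  define r where "r = norm w"
  define t where "t = Arg w"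
  have r: "0 \<le> r" "r < 1" using w by (auto simp: r_def)
  have hd: "deriv \<phi> holomorphic_on ball 0 1" by (rule holomorphic_deriv[OF h]) simp
  define G where "G = (\<lambda>s::real. A * s + K * ((1 - s) * ln (1 - s) + s))"
  have ftc: "((\<lambda>s. A + K * (- ln (1 - s))) has_integral (G r - G 0)) {0..r}"
  proof (rule fundamental_theorem_of_calculus[OF r(1)])
    fix s assume s: "s \<in> {0..r}"
    hence "s < 1" using r by auto
    hence s1: "1 - s \<noteq> 0" "0 < 1 - s" by auto
    have D1: "((\<lambda>s. (1-s)*ln(1-s)) has_real_derivative (-ln(1-s) - 1)) (at s)"
    proof -
      have "((\<lambda>s. (1-s)*ln(1-s)) has_real_derivative ((-1)*ln(1-s) + (1-s)*((-1)/(1-s)))) (at s)"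
        using s1 by (auto intro!: derivative_eq_intros)
      moreover have "(-1)*ln(1-s) + (1-s)*((-1)/(1-s)) = -ln(1-s) - 1" using s1 by simp
      ultimately show ?thesis by simp
    qed
    have D2: "((\<lambda>s. (1-s)*ln(1-s) + s) has_real_derivative (-ln(1-s) - 1 + 1)) (at s)"
      by (rule DERIV_add[OF D1 DERIV_ident])
    have "(G has_real_derivative (A * 1 + K * ((-ln(1-s) - 1) + 1))) (at s)"
      unfolding G_def by (rule DERIV_add[OF DERIV_cmult[OF DERIV_ident] DERIV_cmult[OF D2]])
    thus "(G has_vector_derivative A + K * (- ln (1 - s))) (at s within {0..r})"
      by (auto simp: has_real_derivative_iff_has_vector_derivative[symmetric] intro: has_field_derivative_at_within)
  qed
  have "integral {0..r} (\<lambda>s. norm (deriv \<phi> (of_real s * cis t))) \<le> integral {0..r} (\<lambda>s. A + K * (- ln (1 - s)))"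
  proof (rule integral_le)
    show "(\<lambda>s. norm (deriv \<phi> (of_real s * cis t))) integrable_on {0..r}"
      by (intro integrable_continuous_interval continuous_intros rad_cont[OF hd r(2)])
    show "(\<lambda>s. A + K * (- ln (1 - s))) integrable_on {0..r}" using ftc by blast
    fix s assume s: "s \<in> {0..r}"
    hence "norm (of_real s * cis t) = s" "s < 1" using r by (auto simp: norm_mult)
    thus "norm (deriv \<phi> (of_real s * cis t)) \<le> A + K * (- ln (1 - s))" using b[of "of_real s * cis t"] by simp
  qed
  also have "\<dots> = G r - G 0" using ftc by (simp add: integral_unique)
  also have "\<dots> \<le> A + K"
  proof -
    have "(1 - r) * ln (1 - r) \<le> 0" using r by (intro mult_nonneg_nonpos) auto
    hence "(1 - r) * ln (1 - r) + r \<le> 1" using r by linarith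
    hence "K * ((1 - r) * ln (1 - r) + r) \<le> K" using K by (simp add: mult_left_le)
    moreover have "A * r \<le> A" using A r by (simp add: mult_left_le)
    ultimately show ?thesis by (simp add: G_def)
  qed
  finally have "norm (\<phi> (of_real r * cis t)) \<le> norm (\<phi> 0) + A + K"
    using radial[OF h r, of t] by linarith
  thus ?thesis using polar_ball[OF w] by (simp add: r_def t_def)
qed




lemma int_log:
  fixes r A K :: real
  assumes r: "0 \<le> r" "r < 1" and K: "0 \<le> K" and A: "0 \<le> A"
  shows "(\<lambda>s. A + K * (- ln (1 - s))) integrable_on {0..r}"
    and "integral {0..r} (\<lambda>s. A + K * (- ln (1 - s))) \<le> A + K"
proof -
  define G where "G = (\<lambda>s::real. A * s + K * ((1 - s) * ln (1 - s) + s))"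
  have ftc: "((\<lambda>s. A + K * (- ln (1 - s))) has_integral (G r - G 0)) {0..r}"
  proof (rule fundamental_theorem_of_calculus[OF r(1)])
    fix s assume s: "s \<in> {0..r}"
    hence "s < 1" using r by auto
    hence s1: "1 - s \<noteq> 0" "0 < 1 - s" by auto
    have D1: "((\<lambda>s. (1-s)*ln(1-s)) has_real_derivative (-ln(1-s) - 1)) (at s)"
    proof -
      have "((\<lambda>s. (1-s)*ln(1-s)) has_real_derivative ((-1)*ln(1-s) + (1-s)*((-1)/(1-s)))) (at s)"
        using s1 by (auto intro!: derivative_eq_intros)
      moreover have "(-1)*ln(1-s) + (1-s)*((-1)/(1-s)) = -ln(1-s) - 1" using s1 by simp
      ultimately show ?thesis by simp
    qed
    have D2: "((\<lambda>s. (1-s)*ln(1-s) + s) has_real_derivative (-ln(1-s) - 1 + 1)) (at s)"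
      by (rule DERIV_add[OF D1 DERIV_ident])
    have "(G has_real_derivative (A * 1 + K * ((-ln(1-s) - 1) + 1))) (at s)"
      unfolding G_def by (rule DERIV_add[OF DERIV_cmult[OF DERIV_ident] DERIV_cmult[OF D2]])
    thus "(G has_vector_derivative A + K * (- ln (1 - s))) (at s within {0..r})"
      by (auto simp: has_real_derivative_iff_has_vector_derivative[symmetric] intro: has_field_derivative_at_within)
  qed
  thus "(\<lambda>s. A + K * (- ln (1 - s))) integrable_on {0..r}" by blast
  have "integral {0..r} (\<lambda>s. A + K * (- ln (1 - s))) = G r - G 0" using ftc by (simp add: integral_unique)
  also have "\<dots> \<le> A + K"
  proof -
    have "(1 - r) * ln (1 - r) \<le> 0" using r by (intro mult_nonneg_nonpos) auto
    hence "(1 - r) * ln (1 - r) + r \<le> 1" using r by linarith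
    hence "K * ((1 - r) * ln (1 - r) + r) \<le> K" using K by (simp add: mult_left_le)
    moreover have "A * r \<le> A" using A r by (simp add: mult_left_le)
    ultimately show ?thesis by (simp add: G_def)
  qed
  finally show "integral {0..r} (\<lambda>s. A + K * (- ln (1 - s))) \<le> A + K" .
qed

definition wt :: "real \<Rightarrow> real" where "wt s = 1 + 1 * (- ln (1 - s))"

lemma wt_nonneg: "0 \<le> s \<Longrightarrow> s < 1 \<Longrightarrow> 0 \<le> wt s"
proof -
  assume "0 \<le> s" "s < 1"
  hence "ln (1 - s) \<le> 0" by (subst ln_le_zero_iff) auto
  thus ?thesis unfolding wt_def by simp
qed

lemma wt_cont: "r < 1 \<Longrightarrow> continuous_on {0..r} wt"
  unfolding wt_def by (intro continuous_intros) auto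

lemma wt_int: "0 \<le> r \<Longrightarrow> r < 1 \<Longrightarrow> integral {0..r} wt \<le> 2"
  using int_log(2)[of r 1 1] unfolding wt_def by simp

lemma holder_rad:
  fixes u :: "real \<Rightarrow> real"
  assumes r: "0 \<le> r" "r < 1" and p: "1 \<le> p"
    and u: "continuous_on {0..r} u" "\<And>s. s \<in> {0..r} \<Longrightarrow> 0 \<le> u s"
  shows "integral {0..r} (\<lambda>s. u s * wt s) \<le> 3 * (integral {0..r} (\<lambda>s. u s powr p * wt s)) powr (1/p)"
proof -
  define J where "J = integral {0..r} (\<lambda>s. u s powr p * wt s)"
  have wc: "continuous_on {0..r} wt" by (rule wt_cont[OF r(2)])
  have wn: "\<And>s. s \<in> {0..r} \<Longrightarrow> 0 \<le> wt s" using r by (auto intro!: wt_nonneg)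
  have i1: "(\<lambda>s. u s * wt s) integrable_on {0..r}"
    by (intro integrable_continuous_interval continuous_intros u wc)
  have ip: "(\<lambda>s. u s powr p * wt s) integrable_on {0..r}"
    using p u by (intro integrable_continuous_interval continuous_intros continuous_on_powr' wc) auto
  have iw: "wt integrable_on {0..r}" by (intro integrable_continuous_interval wc)
  have J0: "0 \<le> J" unfolding J_def
    by (rule integral_nonneg[OF ip]) (auto intro!: mult_nonneg_nonneg wn)
  have key: "integral {0..r} (\<lambda>s. u s * wt s) \<le> l * 2 + l powr (1-p) * J" if l: "0 < l" for l
  proof -
    have "integral {0..r} (\<lambda>s. u s * wt s) \<le> integral {0..r} (\<lambda>s. l * wt s + l powr (1-p) * (u s powr p * wt s))"
    proof (rule integral_le[OF i1])
      show "(\<lambda>s. l * wt s + l powr (1-p) * (u s powr p * wt s)) integrable_on {0..r}"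
        by (intro integrable_add integrable_on_mult_right iw ip)
      fix s assume s: "s \<in> {0..r}"
      have "u s \<le> l + l powr (1-p) * u s powr p" by (rule young_pow[OF u(2)[OF s] l p])
      hence "u s * wt s \<le> (l + l powr (1-p) * u s powr p) * wt s" by (rule mult_right_mono) (use wn s in auto)
      thus "u s * wt s \<le> l * wt s + l powr (1-p) * (u s powr p * wt s)" by (simp add: algebra_simps)
    qed
    also have "\<dots> = l * integral {0..r} wt + l powr (1-p) * J"
      unfolding J_def by (simp add: integral_add iw ip integrable_on_mult_right)
    also have "\<dots> \<le> l * 2 + l powr (1-p) * J"
      using wt_int[OF r] l by simp
    finally show ?thesis .
  qed
  show ?thesis
  proof (cases "J = 0")
    case True
    have "integral {0..r} (\<lambda>s. u s * wt s) \<le> 0"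
      by (rule le_eps_zero[of _ 2]) (use key True in auto)
    thus ?thesis using True by (simp add: J_def)
  next
    case False
    hence Jp: "J > 0" using J0 by simp
    define l where "l = J powr (1/p)"
    have l: "l > 0" using Jp by (simp add: l_def)
    have "l powr (1-p) * J = J powr (1/p)"
    proof -
      have "l powr (1-p) * J = J powr ((1/p)*(1-p)) * J powr 1" using Jp by (simp add: l_def powr_powr)
      also have "\<dots> = J powr ((1/p)*(1-p) + 1)" by (simp add: powr_add)
      also have "(1/p)*(1-p) + 1 = 1/p" using p by (simp add: field_simps)
      finally show ?thesis .
    qed
    thus ?thesis using key[OF l] by (simp add: l_def J_def)
  qed
qed




lemma comp_cont:
  fixes a b :: "'a::topological_space \<Rightarrow> real"
  assumes g: "continuous_on (ball 0 1) g" and a: "continuous_on S a" and b: "continuous_on S b"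
    and ab: "\<And>x. x \<in> S \<Longrightarrow> \<bar>a x\<bar> < 1"
  shows "continuous_on S (\<lambda>x. g (of_real (a x) * cis (b x)))"
proof -
  have "continuous_on S (\<lambda>x. of_real (a x) * cis (b x))" by (intro continuous_intros a b)
  moreover have "(\<lambda>x. of_real (a x) * cis (b x)) ` S \<subseteq> ball 0 1" using ab by (auto simp: norm_mult)
  ultimately show ?thesis using continuous_on_compose2[OF g] by blast
qed

lemma avg_J:
  assumes F: "F holomorphic_on ball 0 1" and p: "1 \<le> p" and r: "0 \<le> r" "r < 1" and B: "0 \<le> B"
    and hb: "\<And>s. s \<in> {0..r} \<Longrightarrow> hardy_mean p F s \<le> B"
  shows "continuous_on {0..2*pi} (\<lambda>t. integral {0..r} (\<lambda>s. norm (F (of_real s * cis t)) powr p * wt s))"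
    and "integral {0..2*pi} (\<lambda>t. integral {0..r} (\<lambda>s. norm (F (of_real s * cis t)) powr p * wt s)) \<le> 2*pi*B*2"
proof -
  have Fc: "continuous_on (ball 0 1) F" using F holomorphic_on_imp_continuous_on by blast
  have wc: "continuous_on {0..r} wt" by (rule wt_cont[OF r(2)])
  have c1: "continuous_on ({0..r} \<times> {0..2*pi}) (\<lambda>x. norm (F (of_real (fst x) * cis (snd x))) powr p * wt (fst x))"
  proof -
    have w1: "continuous_on ({0..r} \<times> {0..2*pi}) (\<lambda>x. wt (fst x))"
      by (rule continuous_on_compose2[OF wc continuous_on_fst[OF continuous_on_id]]) auto
    have n1: "continuous_on ({0..r} \<times> {0..2*pi}) (\<lambda>x. F (of_real (fst x) * cis (snd x)))"
      by (rule comp_cont[OF Fc continuous_on_fst[OF continuous_on_id] continuous_on_snd[OF continuous_on_id]]) (use r in auto)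
    show ?thesis
      by (rule continuous_on_mult[OF continuous_on_powr'[OF continuous_on_norm[OF n1] continuous_on_const] w1]) (use p in auto)
  qed
  have c2: "continuous_on ({0..2*pi} \<times> {0..r}) (\<lambda>x. norm (F (of_real (snd x) * cis (fst x))) powr p * wt (snd x))"
  proof -
    have w1: "continuous_on ({0..2*pi} \<times> {0..r}) (\<lambda>x. wt (snd x))"
      by (rule continuous_on_compose2[OF wc continuous_on_snd[OF continuous_on_id]]) auto
    have n1: "continuous_on ({0..2*pi} \<times> {0..r}) (\<lambda>x. F (of_real (snd x) * cis (fst x)))"
      by (rule comp_cont[OF Fc continuous_on_snd[OF continuous_on_id] continuous_on_fst[OF continuous_on_id]]) (use r in auto)
    show ?thesis
      by (rule continuous_on_mult[OF continuous_on_powr'[OF continuous_on_norm[OF n1] continuous_on_const] w1]) (use p in auto)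
  qed
  show "continuous_on {0..2*pi} (\<lambda>t. integral {0..r} (\<lambda>s. norm (F (of_real s * cis t)) powr p * wt s))"
    using integral_continuous_on_param[of "{0..2*pi}" 0 r "\<lambda>t s. norm (F (of_real s * cis t)) powr p * wt s"] c2
    by (simp add: case_prod_beta')
  have swap: "integral {0..r} (\<lambda>s. integral {0..2*pi} (\<lambda>t. norm (F (of_real s * cis t)) powr p * wt s)) =
              integral {0..2*pi} (\<lambda>t. integral {0..r} (\<lambda>s. norm (F (of_real s * cis t)) powr p * wt s))"
    using integral_swap_continuous[where 'a = real and 'b = real, of 0 0 r "2*pi" "\<lambda>s t. norm (F (of_real s * cis t)) powr p * wt s"] c1
    by (simp add: case_prod_beta' cbox_Pair_eq)
  have cin: "continuous_on {0..r} (\<lambda>s. integral {0..2*pi} (\<lambda>t. norm (F (of_real s * cis t)) powr p * wt s))"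
    using integral_continuous_on_param[of "{0..r}" 0 "2*pi" "\<lambda>s t. norm (F (of_real s * cis t)) powr p * wt s"] c1
    by (simp add: case_prod_beta')
  have "integral {0..r} (\<lambda>s. integral {0..2*pi} (\<lambda>t. norm (F (of_real s * cis t)) powr p * wt s)) \<le>
        integral {0..r} (\<lambda>s. wt s * (2*pi*B))"
  proof (rule integral_le)
    show "(\<lambda>s. integral {0..2*pi} (\<lambda>t. norm (F (of_real s * cis t)) powr p * wt s)) integrable_on {0..r}"
      by (rule integrable_continuous_interval[OF cin])
    show "(\<lambda>s. wt s * (2*pi*B)) integrable_on {0..r}"
      by (intro integrable_continuous_interval continuous_intros wc)
    fix s assume s: "s \<in> {0..r}"
    hence s01: "0 \<le> s" "s < 1" using r by auto
    have "((\<lambda>t. norm (F (of_real s * cis t)) powr p * wt s) has_integral (2*pi*hardy_mean p F s * wt s)) {0..2*pi}"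
      by (rule has_integral_mult_left[OF hardy_int[OF F s01]]) (use p in simp)
    hence "integral {0..2*pi} (\<lambda>t. norm (F (of_real s * cis t)) powr p * wt s) = 2*pi*hardy_mean p F s * wt s"
      by (rule integral_unique)
    also have "\<dots> = wt s * (2*pi*hardy_mean p F s)" by simp
    also have "\<dots> \<le> wt s * (2*pi*B)"
      using hb[OF s] wt_nonneg[OF s01] by (intro mult_left_mono) auto
    finally show "integral {0..2*pi} (\<lambda>t. norm (F (of_real s * cis t)) powr p * wt s) \<le> wt s * (2*pi*B)" .
  qed
  also have "\<dots> = integral {0..r} wt * (2*pi*B)" by simp
  also have "\<dots> \<le> 2 * (2*pi*B)" using wt_int[OF r] B by (intro mult_right_mono) auto
  finally show "integral {0..2*pi} (\<lambda>t. integral {0..r} (\<lambda>s. norm (F (of_real s * cis t)) powr p * wt s)) \<le> 2*pi*B*2"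
    using swap by simp
qed




lemma volterra_props:
  assumes hf: "f holomorphic_on ball 0 1" and hg: "g holomorphic_on ball 0 1"
  shows "volterra g f holomorphic_on ball 0 1"
    and "\<And>w. w \<in> ball 0 1 \<Longrightarrow> deriv (volterra g f) w = f w * deriv g w"
    and "\<And>w. w \<in> ball 0 1 \<Longrightarrow> deriv (deriv (volterra g f)) w = deriv f w * deriv g w + f w * deriv (deriv g) w"
    and "volterra g f 0 = 0"
proof -
  define h where "h = (\<lambda>w. f w * deriv g w)"
  have hg': "deriv g holomorphic_on ball 0 1" by (rule holomorphic_deriv[OF hg open_ball])
  have hh: "h holomorphic_on ball 0 1" unfolding h_def
    by (rule holomorphic_on_mult[OF hf hg'])
  obtain \<Phi> where \<Phi>: "\<And>x. x \<in> ball 0 1 \<Longrightarrow> (\<Phi> has_field_derivative h x) (at x within ball 0 1)"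
    using holomorphic_convex_primitive'[OF convex_ball open_ball hh] by metis
  have \<Phi>': "(\<Phi> has_field_derivative h x) (at x)" if "x \<in> ball 0 1" for x
    using \<Phi>[OF that] unfolding at_within_open[OF that open_ball] .
  have eq: "volterra g f z = \<Phi> z - \<Phi> 0" if z: "z \<in> ball 0 1" for z
  proof -
    have ps: "path_image (linepath 0 z) \<subseteq> ball 0 1"
      unfolding path_image_linepath by (rule closed_segment_subset[OF _ z convex_ball]) simp
    have "(h has_contour_integral (\<Phi> (pathfinish (linepath 0 z)) - \<Phi> (pathstart (linepath 0 z)))) (linepath 0 z)"
      by (rule contour_integral_primitive[OF \<Phi> valid_path_linepath ps])
    hence "contour_integral (linepath 0 z) h = \<Phi> z - \<Phi> 0" by (simp add: contour_integral_unique)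
    thus ?thesis unfolding volterra_def h_def by simp
  qed
  have dV: "(volterra g f has_field_derivative h w) (at w)" if w: "w \<in> ball 0 1" for w
  proof -
    have "((\<lambda>z. \<Phi> z - \<Phi> 0) has_field_derivative h w) (at w)"
      using DERIV_diff[OF \<Phi>'[OF w] DERIV_const[of "\<Phi> 0"]] by simp
    thus ?thesis by (rule has_field_derivative_transform_within_open[OF _ open_ball w]) (simp add: eq)
  qed
  show hV: "volterra g f holomorphic_on ball 0 1"
    unfolding holomorphic_on_open[OF open_ball] using dV by blast
  show dV2: "deriv (volterra g f) w = f w * deriv g w" if "w \<in> ball 0 1" for w
    using DERIV_imp_deriv[OF dV[OF that]] by (simp add: h_def)
  show "deriv (deriv (volterra g f)) w = deriv f w * deriv g w + f w * deriv (deriv g) w" if w: "w \<in> ball 0 1" for w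
  proof -
    have "deriv (deriv (volterra g f)) w = deriv h w"
      by (rule complex_derivative_transform_within_open[OF holomorphic_deriv[OF hV open_ball] hh open_ball w])
         (simp add: dV2 h_def)
    also have "\<dots> = f w * deriv (deriv g) w + deriv f w * deriv g w" unfolding h_def
      by (rule deriv_mult[OF holomorphic_on_imp_differentiable_at[OF hf open_ball w] holomorphic_on_imp_differentiable_at[OF hg' open_ball w]])
    finally show ?thesis by simp
  qed
  show "volterra g f 0 = 0" by (simp add: volterra_def)
qed




lemma s2_facts:
  assumes hf: "f holomorphic_on ball 0 1" and p: "1 \<le> p" and k: "0 \<le> k"
    and hb0: "\<forall>R\<in>{0<..<1}. hardy_mean p (deriv (deriv f)) R \<le> k powr p"
  shows "deriv f holomorphic_on ball 0 1"
    and "deriv (deriv f) holomorphic_on ball 0 1"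
    and "\<And>w. norm w < 1 \<Longrightarrow> norm (deriv (deriv f) w) \<le> 4*k/(1 - norm w)"
    and "\<And>w. norm w < 1 \<Longrightarrow> norm (deriv f w) \<le> norm (deriv f 0) + (4*k) * (- ln (1 - norm w))"
    and "\<And>w. norm w < 1 \<Longrightarrow> norm (f w) \<le> norm (f 0) + norm (deriv f 0) + 4*k"
    and "\<And>s. 0 \<le> s \<Longrightarrow> s < 1 \<Longrightarrow> hardy_mean p (deriv (deriv f)) s \<le> (4*k) powr p"
proof -
  have hb: "\<And>R. 0 < R \<Longrightarrow> R < 1 \<Longrightarrow> hardy_mean p (deriv (deriv f)) R \<le> k powr p" using hb0 by auto
  show h1: "deriv f holomorphic_on ball 0 1" by (rule holomorphic_deriv[OF hf open_ball])
  show h2: "deriv (deriv f) holomorphic_on ball 0 1" by (rule holomorphic_deriv[OF h1 open_ball])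
  show b3: "norm (deriv (deriv f) w) \<le> 4*k/(1 - norm w)" if "norm w < 1" for w
    by (rule pointwise_bound[OF h2 p k hb that])
  show b4: "norm (deriv f w) \<le> norm (deriv f 0) + (4*k) * (- ln (1 - norm w))" if "norm w < 1" for w
    by (rule log_bound[OF h1 _ b3 that]) (use k in simp)
  show "norm (f w) \<le> norm (f 0) + norm (deriv f 0) + 4*k" if "norm w < 1" for w
    by (rule bdd_bound[OF hf _ _ b4 that]) (use k in simp_all)
  show "hardy_mean p (deriv (deriv f)) s \<le> (4*k) powr p" if s: "0 \<le> s" "s < 1" for s
  proof (cases "s = 0")
    case True
    have "hardy_mean p (deriv (deriv f)) s = norm (deriv (deriv f) 0) powr p"
      using True by (simp add: hardy_mean_def)
    also have "\<dots> \<le> (4*k) powr p"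
      using b3[of 0] p by (intro powr_mono2) auto
    finally show ?thesis .
  next
    case False
    hence "hardy_mean p (deriv (deriv f)) s \<le> k powr p" using hb s by auto
    also have "\<dots> \<le> (4*k) powr p" using k p by (intro powr_mono2) auto
    finally show ?thesis .
  qed
qed

lemma sum4_powr:
  fixes a b c d p :: real
  assumes "0 \<le> a" "0 \<le> b" "0 \<le> c" "0 \<le> d" "0 < p"
  shows "(a+b+c+d) powr p \<le> 4 powr p * (a powr p + b powr p + c powr p + d powr p)"
proof -
  define m where "m = max (max a b) (max c d)"
  have "a+b+c+d \<le> 4*m" unfolding m_def by linarith
  hence "(a+b+c+d) powr p \<le> (4*m) powr p" using assms by (intro powr_mono2) auto
  also have "\<dots> = 4 powr p * m powr p" using assms by (simp add: powr_mult m_def le_max_iff_disj)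
  also have "m powr p \<le> a powr p + b powr p + c powr p + d powr p"
  proof -
    have "m = a \<or> m = b \<or> m = c \<or> m = d" unfolding m_def by (auto simp: max_def)
    moreover have "0 \<le> a powr p" "0 \<le> b powr p" "0 \<le> c powr p" "0 \<le> d powr p" by auto
    ultimately show ?thesis by auto
  qed
  hence "4 powr p * m powr p \<le> 4 powr p * (a powr p + b powr p + c powr p + d powr p)"
    by (intro mult_left_mono) auto
  finally show ?thesis .
qed




lemma pw_bound:
  assumes hf: "f holomorphic_on ball 0 1" and hg: "g holomorphic_on ball 0 1" and p: "1 \<le> p"
    and kf: "0 \<le> kf" and kg: "0 \<le> kg"
    and hbf: "\<forall>R\<in>{0<..<1}. hardy_mean p (deriv (deriv f)) R \<le> kf powr p"
    and hbg: "\<forall>R\<in>{0<..<1}. hardy_mean p (deriv (deriv g)) R \<le> kg powr p"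
    and r: "0 \<le> r" "r < 1"
    and Af: "Af = norm (f 0) + norm (deriv f 0) + kf" and Ag: "Ag = norm (g 0) + norm (deriv g 0) + kg"
  shows "norm (deriv f (of_real r * cis t) * deriv g (of_real r * cis t) + f (of_real r * cis t) * deriv (deriv g) (of_real r * cis t)) powr p
    \<le> 4 powr p * ((Af*Ag) powr p
        + (12*Ag) powr p * integral {0..r} (\<lambda>s. norm (deriv (deriv f) (of_real s * cis t)) powr p * wt s)
        + (12*Af) powr p * integral {0..r} (\<lambda>s. norm (deriv (deriv g) (of_real s * cis t)) powr p * wt s)
        + (4*Af) powr p * norm (deriv (deriv g) (of_real r * cis t)) powr p)"
proof -
  note sf = s2_facts[OF hf p kf hbf]
  note sg = s2_facts[OF hg p kg hbg]
  define F where "F = deriv (deriv f)"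
  define G where "G = deriv (deriv g)"
  define f1 where "f1 = deriv f"
  define g1 where "g1 = deriv g"
  have hF: "F holomorphic_on ball 0 1" using sf(2) by (simp add: F_def)
  have hG: "G holomorphic_on ball 0 1" using sg(2) by (simp add: G_def)
  have hf1: "f1 holomorphic_on ball 0 1" using sf(1) by (simp add: f1_def)
  have hg1: "g1 holomorphic_on ball 0 1" using sg(1) by (simp add: g1_def)
  have Af0: "0 \<le> Af" "kf \<le> Af" "norm (f1 0) \<le> Af" "norm (f 0) \<le> Af" using kf by (auto simp: Af f1_def)
  have Ag0: "0 \<le> Ag" "kg \<le> Ag" "norm (g1 0) \<le> Ag" "norm (g 0) \<le> Ag" using kg by (auto simp: Ag g1_def)
  define c where "c = cis t"
  define z where "z = of_real r * c"
  have z: "norm z < 1" using r by (simp add: z_def c_def norm_mult)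
  have pt: "norm w = s" "norm w < 1" if "w = of_real s * c" "0 \<le> s" "s < 1" for w s
    using that by (auto simp: c_def norm_mult)
  have g1b: "norm (g1 w) \<le> 4*Ag * wt (norm w)" if "norm w < 1" for w
  proof -
    have L: "0 \<le> - ln (1 - norm w)" using that by (simp add: ln_le_zero_iff)
    have "norm (g1 w) \<le> norm (g1 0) + (4*kg) * (- ln (1 - norm w))" using sg(4)[OF that] by (simp add: g1_def)
    also have "\<dots> \<le> 4*Ag + (4*Ag) * (- ln (1 - norm w))"
      using Ag0 L by (intro add_mono mult_right_mono) auto
    also have "\<dots> = 4*Ag * wt (norm w)" by (simp add: wt_def algebra_simps)
    finally show ?thesis .
  qed
  have f1b: "norm (f1 w) \<le> 4*Af * wt (norm w)" if "norm w < 1" for w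
  proof -
    have L: "0 \<le> - ln (1 - norm w)" using that by (simp add: ln_le_zero_iff)
    have "norm (f1 w) \<le> norm (f1 0) + (4*kf) * (- ln (1 - norm w))" using sf(4)[OF that] by (simp add: f1_def)
    also have "\<dots> \<le> 4*Af + (4*Af) * (- ln (1 - norm w))"
      using Af0 L by (intro add_mono mult_right_mono) auto
    also have "\<dots> = 4*Af * wt (norm w)" by (simp add: wt_def algebra_simps)
    finally show ?thesis .
  qed
  have fb: "norm (f z) \<le> 4*Af"
    using sf(5)[OF z] norm_ge_zero[of "f 0"] norm_ge_zero[of "deriv f 0"] kf unfolding Af distrib_left by linarith
  define P where "P = (\<lambda>w. f1 w * g1 w)"
  have hP: "P holomorphic_on ball 0 1" unfolding P_def by (rule holomorphic_on_mult[OF hf1 hg1])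
  have dP: "deriv P w = f1 w * G w + F w * g1 w" if "norm w < 1" for w
  proof -
    have w: "w \<in> ball 0 1" using that by simp
    have "deriv P w = f1 w * deriv g1 w + deriv f1 w * g1 w" unfolding P_def
      by (rule deriv_mult[OF holomorphic_on_imp_differentiable_at[OF hf1 open_ball w] holomorphic_on_imp_differentiable_at[OF hg1 open_ball w]])
    thus ?thesis by (simp add: F_def G_def f1_def g1_def)
  qed
  have hdP: "deriv P holomorphic_on ball 0 1" by (rule holomorphic_deriv[OF hP open_ball])
  have radP: "norm (P z) \<le> norm (P 0) + integral {0..r} (\<lambda>s. norm (deriv P (of_real s * c)))"
    using radial[OF hP r, of t] by (simp add: z_def c_def)
  define XF where "XF = integral {0..r} (\<lambda>s. norm (F (of_real s * c)) * wt s)"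
  define XG where "XG = integral {0..r} (\<lambda>s. norm (G (of_real s * c)) * wt s)"
  define JF where "JF = integral {0..r} (\<lambda>s. norm (F (of_real s * c)) powr p * wt s)"
  define JG where "JG = integral {0..r} (\<lambda>s. norm (G (of_real s * c)) powr p * wt s)"
  have wc: "continuous_on {0..r} wt" by (rule wt_cont[OF r(2)])
  have cF: "continuous_on {0..r} (\<lambda>s. norm (F (of_real s * c)))"
    unfolding c_def by (intro continuous_intros rad_cont[OF hF r(2)])
  have cG: "continuous_on {0..r} (\<lambda>s. norm (G (of_real s * c)))"
    unfolding c_def by (intro continuous_intros rad_cont[OF hG r(2)])
  have iF: "(\<lambda>s. norm (F (of_real s * c)) * wt s) integrable_on {0..r}"
    by (intro integrable_continuous_interval continuous_on_mult cF wc)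
  have iG: "(\<lambda>s. norm (G (of_real s * c)) * wt s) integrable_on {0..r}"
    by (intro integrable_continuous_interval continuous_on_mult cG wc)
  have intb: "integral {0..r} (\<lambda>s. norm (deriv P (of_real s * c))) \<le> 4*Ag * XF + 4*Af * XG"
  proof -
    have "integral {0..r} (\<lambda>s. norm (deriv P (of_real s * c))) \<le>
          integral {0..r} (\<lambda>s. 4*Ag * (norm (F (of_real s * c)) * wt s) + 4*Af * (norm (G (of_real s * c)) * wt s))"
    proof (rule integral_le)
      show "(\<lambda>s. norm (deriv P (of_real s * c))) integrable_on {0..r}"
        unfolding c_def by (intro integrable_continuous_interval continuous_intros rad_cont[OF hdP r(2)])
      show "(\<lambda>s. 4*Ag * (norm (F (of_real s * c)) * wt s) + 4*Af * (norm (G (of_real s * c)) * wt s)) integrable_on {0..r}"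
        by (intro integrable_add integrable_on_mult_right iF iG)
      fix s assume s: "s \<in> {0..r}"
      define w where "w = of_real s * c"
      have ws: "norm w = s" "norm w < 1" using pt[of w s] s r by (auto simp: w_def)
      have "norm (deriv P w) \<le> norm (f1 w) * norm (G w) + norm (F w) * norm (g1 w)"
        using dP[OF ws(2)] norm_triangle_ineq[of "f1 w * G w" "F w * g1 w"] by (simp add: norm_mult)
      also have "\<dots> \<le> (4*Af * wt s) * norm (G w) + norm (F w) * (4*Ag * wt s)"
        using f1b[OF ws(2)] g1b[OF ws(2)] ws by (intro add_mono mult_right_mono mult_left_mono) auto
      finally show "norm (deriv P (of_real s * c)) \<le> 4*Ag * (norm (F (of_real s * c)) * wt s) + 4*Af * (norm (G (of_real s * c)) * wt s)"
        by (simp add: w_def algebra_simps)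
    qed
    also have "\<dots> = 4*Ag * XF + 4*Af * XG"
      unfolding XF_def XG_def by (simp add: integral_add integrable_on_mult_right iF iG)
    finally show ?thesis .
  qed
  have XF: "XF \<le> 3 * JF powr (1/p)" unfolding XF_def JF_def
    by (rule holder_rad[OF r p cF]) auto
  have XG: "XG \<le> 3 * JG powr (1/p)" unfolding XG_def JG_def
    by (rule holder_rad[OF r p cG]) auto
  have JF0: "0 \<le> JF" unfolding JF_def
    by (rule integral_nonneg) (use r p in \<open>auto intro!: integrable_continuous_interval continuous_intros continuous_on_powr' cF wc mult_nonneg_nonneg wt_nonneg\<close>)
  have JG0: "0 \<le> JG" unfolding JG_def
    by (rule integral_nonneg) (use r p in \<open>auto intro!: integrable_continuous_interval continuous_intros continuous_on_powr' cG wc mult_nonneg_nonneg wt_nonneg\<close>)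
  have P0: "norm (P 0) \<le> Af * Ag" unfolding P_def using Af0 Ag0 by (simp add: norm_mult mult_mono)
  have "norm (f1 z * g1 z + f z * G z) \<le> norm (P z) + norm (f z) * norm (G z)"
    using norm_triangle_ineq[of "f1 z * g1 z" "f z * G z"] by (simp add: P_def norm_mult)
  also have "\<dots> \<le> (Af*Ag + 4*Ag * (3 * JF powr (1/p)) + 4*Af * (3 * JG powr (1/p))) + 4*Af * norm (G z)"
  proof (intro add_mono mult_right_mono)
    show "norm (P z) \<le> Af*Ag + 4*Ag * (3 * JF powr (1/p)) + 4*Af * (3 * JG powr (1/p))"
      using radP intb P0 XF XG Af0 Ag0
      by (smt (verit, best) mult_left_mono)
  qed (use fb in auto)
  also have "\<dots> = Af*Ag + 12*Ag * JF powr (1/p) + 12*Af * JG powr (1/p) + 4*Af * norm (G z)" by simp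
  finally have nb: "norm (f1 z * g1 z + f z * G z) \<le> Af*Ag + 12*Ag * JF powr (1/p) + 12*Af * JG powr (1/p) + 4*Af * norm (G z)" .
  have pp: "p > 0" using p by simp
  have "norm (f1 z * g1 z + f z * G z) powr p \<le> (Af*Ag + 12*Ag * JF powr (1/p) + 12*Af * JG powr (1/p) + 4*Af * norm (G z)) powr p"
    by (rule powr_mono2[OF _ _ nb]) (use pp in auto)
  also have "\<dots> \<le> 4 powr p * ((Af*Ag) powr p + (12*Ag * JF powr (1/p)) powr p + (12*Af * JG powr (1/p)) powr p + (4*Af * norm (G z)) powr p)"
    by (rule sum4_powr) (use Af0 Ag0 pp in auto)
  also have "(12*Ag * JF powr (1/p)) powr p = (12*Ag) powr p * JF"
    using Ag0 JF0 pp by (simp add: powr_mult powr_powr)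
  also have "(12*Af * JG powr (1/p)) powr p = (12*Af) powr p * JG"
    using Af0 JG0 pp by (simp add: powr_mult powr_powr)
  also have "(4*Af * norm (G z)) powr p = (4*Af) powr p * norm (G z) powr p"
    using Af0 by (simp add: powr_mult)
  finally show ?thesis by (simp add: F_def G_def f1_def g1_def JF_def JG_def z_def c_def)
qed


lemma main_est:
  assumes hf: "f holomorphic_on ball 0 1" and hg: "g holomorphic_on ball 0 1" and p: "1 \<le> p"
    and kf: "0 \<le> kf" and kg: "0 \<le> kg"
    and hbf: "\<forall>R\<in>{0<..<1}. hardy_mean p (deriv (deriv f)) R \<le> kf powr p"
    and hbg: "\<forall>R\<in>{0<..<1}. hardy_mean p (deriv (deriv g)) R \<le> kg powr p"
    and r: "0 < r" "r < 1"
    and Af: "Af = norm (f 0) + norm (deriv f 0) + kf" and Ag: "Ag = norm (g 0) + norm (deriv g 0) + kg"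
  shows "hardy_mean p (\<lambda>z. deriv f z * deriv g z + f z * deriv (deriv g) z) r \<le> 6 * (192 * (Af * Ag)) powr p"
proof -
  note sf = s2_facts[OF hf p kf hbf]
  note sg = s2_facts[OF hg p kg hbg]
  have r0: "0 \<le> r" using r by simp
  have pp: "0 < p" using p by simp
  have Af0: "0 \<le> Af" "kf \<le> Af" using kf by (auto simp: Af)
  have Ag0: "0 \<le> Ag" "kg \<le> Ag" using kg by (auto simp: Ag)
  define T where "T = (\<lambda>z. deriv f z * deriv g z + f z * deriv (deriv g) z)"
  have hT: "T holomorphic_on ball 0 1" unfolding T_def
    by (rule holomorphic_on_add[OF holomorphic_on_mult[OF sf(1) sg(1)] holomorphic_on_mult[OF hf sg(2)]])
  define JF where "JF = (\<lambda>t. integral {0..r} (\<lambda>s. norm (deriv (deriv f) (of_real s * cis t)) powr p * wt s))"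
  define JG where "JG = (\<lambda>t. integral {0..r} (\<lambda>s. norm (deriv (deriv g) (of_real s * cis t)) powr p * wt s))"
  define NG where "NG = (\<lambda>t. norm (deriv (deriv g) (of_real r * cis t)) powr p)"
  have hbF: "\<And>s. s \<in> {0..r} \<Longrightarrow> hardy_mean p (deriv (deriv f)) s \<le> (4*kf) powr p" using sf(6) r by auto
  have hbG: "\<And>s. s \<in> {0..r} \<Longrightarrow> hardy_mean p (deriv (deriv g)) s \<le> (4*kg) powr p" using sg(6) r by auto
  have aF: "continuous_on {0..2*pi} JF" "integral {0..2*pi} JF \<le> 2*pi*((4*kf) powr p)*2"
    unfolding JF_def using avg_J[OF sf(2) p r0 r(2) powr_ge_zero hbF] by auto
  have aG: "continuous_on {0..2*pi} JG" "integral {0..2*pi} JG \<le> 2*pi*((4*kg) powr p)*2"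
    unfolding JG_def using avg_J[OF sg(2) p r0 r(2) powr_ge_zero hbG] by auto
  have iJF: "(JF has_integral integral {0..2*pi} JF) {0..2*pi}"
    by (rule integrable_integral[OF integrable_continuous_interval[OF aF(1)]])
  have iJG: "(JG has_integral integral {0..2*pi} JG) {0..2*pi}"
    by (rule integrable_integral[OF integrable_continuous_interval[OF aG(1)]])
  have iNG: "(NG has_integral (2*pi*hardy_mean p (deriv (deriv g)) r)) {0..2*pi}"
    unfolding NG_def by (rule hardy_int[OF sg(2) r0 r(2) pp])
  have iT: "((\<lambda>t. norm (T (of_real r * cis t)) powr p) has_integral (2*pi*hardy_mean p T r)) {0..2*pi}"
    by (rule hardy_int[OF hT r0 r(2) pp])
  define c1 where "c1 = (Af*Ag) powr p"
  define c2 where "c2 = (12*Ag) powr p"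
  define c3 where "c3 = (12*Af) powr p"
  define c4 where "c4 = (4*Af) powr p"
  define V where "V = 4 powr p * ((c1 * (2*pi - 0) + c2 * integral {0..2*pi} JF) + c3 * integral {0..2*pi} JG + c4 * (2*pi*hardy_mean p (deriv (deriv g)) r))"
  have iR: "((\<lambda>t. 4 powr p * (c1 + c2 * JF t + c3 * JG t + c4 * NG t)) has_integral V) {0..2*pi}"
    unfolding V_def
    by (intro has_integral_mult_right has_integral_add iJF iJG iNG)
       (use has_integral_const_real[of c1 0 "2*pi"] in \<open>simp add: mult.commute\<close>)
  have "2*pi*hardy_mean p T r \<le> V"
  proof (rule has_integral_le[OF iT iR])
    fix t assume "t \<in> {0..2*pi}"
    show "norm (T (of_real r * cis t)) powr p \<le> 4 powr p * (c1 + c2 * JF t + c3 * JG t + c4 * NG t)"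
      using pw_bound[OF hf hg p kf kg hbf hbg r0 r(2) Af Ag, of t]
      by (simp add: T_def c1_def c2_def c3_def c4_def JF_def JG_def NG_def)
  qed
  also have "V \<le> 4 powr p * (12*pi*(48*(Af*Ag)) powr p)"
  proof -
    define Q where "Q = 48*(Af*Ag)"
    have Q0: "0 \<le> Q" using Af0 Ag0 by (simp add: Q_def)
    have m1: "Ag*kf \<le> Af*Ag" using mult_left_mono[OF Af0(2) Ag0(1)] by (simp add: mult.commute)
    have m3: "0 \<le> Af*Ag" using Af0 Ag0 by simp
    have m2: "Af*kg \<le> Af*Ag" using mult_left_mono[OF Ag0(2) Af0(1)] by simp
    have t1: "c1 \<le> Q powr p" unfolding c1_def Q_def
      by (rule powr_mono2) (use Af0 Ag0 pp in \<open>auto intro!: mult_nonneg_nonneg\<close>)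
    have t2: "c2 * integral {0..2*pi} JF \<le> 4*pi * Q powr p"
    proof -
      have "c2 * integral {0..2*pi} JF \<le> c2 * (2*pi*((4*kf) powr p)*2)"
        by (rule mult_left_mono[OF aF(2)]) (simp add: c2_def)
      also have "\<dots> = 4*pi * (c2 * (4*kf) powr p)" by simp
      also have "c2 * (4*kf) powr p = (48*(Ag*kf)) powr p"
        unfolding c2_def using Ag0 kf by (simp add: powr_mult[symmetric] algebra_simps)
      also have "(48*(Ag*kf)) powr p \<le> Q powr p" unfolding Q_def
        by (rule powr_mono2) (use Af0 Ag0 kf pp m1 in \<open>auto intro!: mult_nonneg_nonneg\<close>)
      finally show ?thesis by simp
    qed
    have t3: "c3 * integral {0..2*pi} JG \<le> 4*pi * Q powr p"
    proof -
      have "c3 * integral {0..2*pi} JG \<le> c3 * (2*pi*((4*kg) powr p)*2)"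
        by (rule mult_left_mono[OF aG(2)]) (simp add: c3_def)
      also have "\<dots> = 4*pi * (c3 * (4*kg) powr p)" by simp
      also have "c3 * (4*kg) powr p = (48*(Af*kg)) powr p"
        unfolding c3_def using Af0 kg by (simp add: powr_mult[symmetric] algebra_simps)
      also have "(48*(Af*kg)) powr p \<le> Q powr p" unfolding Q_def
        by (rule powr_mono2) (use Af0 Ag0 kg pp m2 m3 in \<open>auto intro!: mult_nonneg_nonneg\<close>)
      finally show ?thesis by simp
    qed
    have t4: "c4 * (2*pi*hardy_mean p (deriv (deriv g)) r) \<le> 2*pi * Q powr p"
    proof -
      have "hardy_mean p (deriv (deriv g)) r \<le> kg powr p" using hbg r by auto
      hence "c4 * (2*pi*hardy_mean p (deriv (deriv g)) r) \<le> c4 * (2*pi*kg powr p)"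
        by (intro mult_left_mono) (auto simp: c4_def)
      also have "\<dots> = 2*pi * (c4 * kg powr p)" by simp
      also have "c4 * kg powr p = (4*(Af*kg)) powr p"
        unfolding c4_def using Af0 kg by (simp add: powr_mult[symmetric] algebra_simps)
      also have "(4*(Af*kg)) powr p \<le> Q powr p"
      proof -
        have a1: "4*(Af*kg) \<le> 48*(Af*Ag)" using m2 m3 by linarith
        have a2: "0 \<le> 4*(Af*kg)" using Af0 kg by simp
        show ?thesis unfolding Q_def by (rule powr_mono2[OF _ a2 a1]) (use pp in simp)
      qed
      finally show ?thesis by simp
    qed
    have t1': "c1 * (2*pi - 0) \<le> 2*pi * Q powr p" using t1 by (simp add: mult.commute)
    have S: "(c1 * (2*pi - 0) + c2 * integral {0..2*pi} JF) + c3 * integral {0..2*pi} JG + c4 * (2*pi*hardy_mean p (deriv (deriv g)) r)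
        \<le> 12*pi * Q powr p" using t1' t2 t3 t4 by linarith
    have "V \<le> 4 powr p * (12*pi * Q powr p)"
      unfolding V_def by (rule mult_left_mono[OF S]) simp
    thus ?thesis by (simp add: Q_def)
  qed
  finally have "2*pi*hardy_mean p T r \<le> 4 powr p * (12*pi*(48*(Af*Ag)) powr p)" .
  hence "hardy_mean p T r \<le> 6 * (4 powr p * (48*(Af*Ag)) powr p)"
    by (simp add: algebra_simps)
  also have "4 powr p * (48*(Af*Ag)) powr p = (192*(Af*Ag)) powr p"
    using Af0 Ag0 by (simp add: powr_mult[symmetric])
  finally show ?thesis by (simp add: T_def)
qed




lemma hardy_mean_cong:
  assumes "\<And>z. norm z < 1 \<Longrightarrow> f z = g z" "0 \<le> r" "r < 1"
  shows "hardy_mean p f r = hardy_mean p g r"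
proof -
  have "\<And>t. norm (of_real r * cis t) < 1" using assms by (simp add: norm_mult)
  thus ?thesis unfolding hardy_mean_def using assms(1) by simp
qed

lemma hardy_mean_nonneg:
  assumes "h holomorphic_on ball 0 1" "0 \<le> r" "r < 1" "0 < p"
  shows "0 \<le> hardy_mean p h r"
proof -
  have "0 \<le> 2*pi*hardy_mean p h r"
    by (rule has_integral_nonneg[OF hardy_int[OF assms]]) simp
  thus ?thesis using pi_gt_zero by (auto simp: zero_le_mult_iff)
qed

lemma hardy_norm_facts:
  assumes H: "in_Hardy p F" and p: "1 \<le> p"
  shows "0 \<le> Hardy_norm p F"
    and "\<forall>R\<in>{0<..<1}. hardy_mean p F R \<le> (Hardy_norm p F) powr p"
proof -
  define S where "S = (SUP r\<in>{0<..<1}. hardy_mean p F r)"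
  have hF: "F holomorphic_on ball 0 1" and bdd: "bdd_above (hardy_mean p F ` {0<..<1})"
    using H by (auto simp: in_Hardy_def)
  have le: "hardy_mean p F R \<le> S" if "R \<in> {0<..<1}" for R
    unfolding S_def by (rule cSUP_upper[OF that bdd])
  have S0: "0 \<le> S"
    using le[of "1/2"] hardy_mean_nonneg[OF hF, of "1/2" p] p by auto
  show "0 \<le> Hardy_norm p F" by (simp add: Hardy_norm_def)
  have "(Hardy_norm p F) powr p = S"
    unfolding Hardy_norm_def S_def[symmetric] using S0 p by (simp add: powr_powr)
  thus "\<forall>R\<in>{0<..<1}. hardy_mean p F R \<le> (Hardy_norm p F) powr p" using le by simp
qed

lemma hardy_norm_le:
  assumes hF: "F holomorphic_on ball 0 1" and p: "1 \<le> p"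
    and b: "\<And>R. R \<in> {0<..<1} \<Longrightarrow> hardy_mean p F R \<le> M"
  shows "Hardy_norm p F \<le> M powr (1/p)"
proof -
  define S where "S = (SUP r\<in>{0<..<1}. hardy_mean p F r)"
  have SM: "S \<le> M" unfolding S_def by (rule cSUP_least) (use b in auto)
  have bdd: "bdd_above (hardy_mean p F ` {0<..<1})" using b by (intro bdd_aboveI2[where M=M]) auto
  have S0: "0 \<le> S"
    using cSUP_upper[OF _ bdd, of "1/2"] hardy_mean_nonneg[OF hF, of "1/2" p] p unfolding S_def by auto
  show ?thesis unfolding Hardy_norm_def S_def[symmetric]
    by (rule powr_mono2) (use S0 SM p in auto)
qed




theorem theorem4p1:
  fixes p :: real and g :: "complex \<Rightarrow> complex"
  assumes "1 \<le> p" and "g holomorphic_on ball 0 1"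
  shows "((\<forall>f. in_S2 p f \<longrightarrow> in_S2 p (volterra g f)) \<and>
          (\<exists>C. \<forall>f. in_S2 p f \<longrightarrow> S2_norm p (volterra g f) \<le> C * S2_norm p f))
         \<longleftrightarrow> in_S2 p g"
proof
  note p = assms(1) and hg = assms(2)
  have pp: "0 < p" using p by simp
  assume L: "(\<forall>f. in_S2 p f \<longrightarrow> in_S2 p (volterra g f)) \<and>
          (\<exists>C. \<forall>f. in_S2 p f \<longrightarrow> S2_norm p (volterra g f) \<le> C * S2_norm p f)"
  define one :: "complex \<Rightarrow> complex" where "one = (\<lambda>_. 1)"
  have h1: "one holomorphic_on ball 0 1" unfolding one_def by simp
  have d1: "deriv one = (\<lambda>_. 0)" unfolding one_def by simp
  have "in_S2 p one"
  proof -
    have "hardy_mean p (\<lambda>_. 0) r = 0" for r using pp by (simp add: hardy_mean_def)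
    hence "in_Hardy p (\<lambda>_. 0)" unfolding in_Hardy_def by (auto simp: bdd_above_def)
    thus ?thesis unfolding in_S2_def using h1 d1 by simp
  qed
  hence "in_S2 p (volterra g one)" using L by blast
  hence H: "in_Hardy p (deriv (deriv (volterra g one)))" by (simp add: in_S2_def)
  have eqV: "deriv (deriv (volterra g one)) z = deriv (deriv g) z" if "norm z < 1" for z
    using volterra_props(3)[OF h1 hg, of z] that d1 by (simp add: one_def)
  have hm: "hardy_mean p (deriv (deriv (volterra g one))) r = hardy_mean p (deriv (deriv g)) r" if "r \<in> {0<..<1}" for r
    by (rule hardy_mean_cong[OF eqV]) (use that in auto)
  have "hardy_mean p (deriv (deriv (volterra g one))) ` {0<..<1} = hardy_mean p (deriv (deriv g)) ` {0<..<1}"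
    using hm by (rule image_cong[OF refl])
  hence "bdd_above (hardy_mean p (deriv (deriv g)) ` {0<..<1})" using H by (simp add: in_Hardy_def)
  moreover have "deriv (deriv g) holomorphic_on ball 0 1"
    by (intro holomorphic_deriv hg open_ball)
  ultimately show "in_S2 p g" unfolding in_S2_def in_Hardy_def using hg by simp
next
  note p = assms(1) and hg = assms(2)
  have pp: "0 < p" using p by simp
  assume R: "in_S2 p g"
  hence HG: "in_Hardy p (deriv (deriv g))" by (simp add: in_S2_def)
  define kg where "kg = Hardy_norm p (deriv (deriv g))"
  define Ag where "Ag = norm (g 0) + norm (deriv g 0) + kg"
  have kg: "0 \<le> kg" "\<forall>R\<in>{0<..<1}. hardy_mean p (deriv (deriv g)) R \<le> kg powr p"
    using hardy_norm_facts[OF HG p] by (auto simp: kg_def)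
  have main: "in_S2 p (volterra g f) \<and> S2_norm p (volterra g f) \<le> (norm (deriv g 0) + 1152 * Ag) * S2_norm p f"
    if f: "in_S2 p f" for f
  proof -
    have hf: "f holomorphic_on ball 0 1" and HF: "in_Hardy p (deriv (deriv f))" using f by (auto simp: in_S2_def)
    define kf where "kf = Hardy_norm p (deriv (deriv f))"
    define Af where "Af = norm (f 0) + norm (deriv f 0) + kf"
    have kf: "0 \<le> kf" "\<forall>R\<in>{0<..<1}. hardy_mean p (deriv (deriv f)) R \<le> kf powr p"
      using hardy_norm_facts[OF HF p] by (auto simp: kf_def)
    have Af0: "0 \<le> Af" using kf by (simp add: Af_def)
    have Ag0: "0 \<le> Ag" using kg by (simp add: Ag_def)
    have SA: "S2_norm p f = Af" by (simp add: S2_norm_def Af_def kf_def)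
    define V where "V = volterra g f"
    note vp = volterra_props[OF hf hg, folded V_def]
    have hV2: "deriv (deriv V) holomorphic_on ball 0 1"
      by (intro holomorphic_deriv vp(1) open_ball)
    have hmV: "hardy_mean p (deriv (deriv V)) r \<le> 6 * (192 * (Af * Ag)) powr p" if r: "r \<in> {0<..<1}" for r
    proof -
      have "hardy_mean p (deriv (deriv V)) r = hardy_mean p (\<lambda>z. deriv f z * deriv g z + f z * deriv (deriv g) z) r"
        by (rule hardy_mean_cong) (use r vp(3) in auto)
      also have "\<dots> \<le> 6 * (192 * (Af * Ag)) powr p"
        by (rule main_est[OF hf hg p kf(1) kg(1) kf(2) kg(2) _ _ Af_def Ag_def]) (use r in auto)
      finally show ?thesis .
    qed
    have inV: "in_S2 p V"
      unfolding in_S2_def in_Hardy_def using vp(1) hV2 hmV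
      by (auto intro!: bdd_aboveI2[where M="6 * (192 * (Af * Ag)) powr p"])
    have HN: "Hardy_norm p (deriv (deriv V)) \<le> (6 * (192 * (Af * Ag)) powr p) powr (1/p)"
      by (rule hardy_norm_le[OF hV2 p hmV])
    also have "\<dots> = 6 powr (1/p) * (192 * (Af * Ag))"
      using Af0 Ag0 pp by (simp add: powr_mult powr_powr)
    also have "\<dots> \<le> 6 * (192 * (Af * Ag))"
    proof (rule mult_right_mono)
      have "6 powr (1/p) \<le> 6 powr 1" by (rule powr_mono) (use p in auto)
      thus "6 powr (1/p) \<le> (6::real)" by simp
    qed (use Af0 Ag0 in simp)
    finally have HN': "Hardy_norm p (deriv (deriv V)) \<le> 1152 * (Af * Ag)" by simp
    have "S2_norm p V = norm (f 0 * deriv g 0) + Hardy_norm p (deriv (deriv V))"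
      using vp(2)[of 0] vp(4) by (simp add: S2_norm_def)
    also have "\<dots> \<le> Af * norm (deriv g 0) + 1152 * (Af * Ag)"
    proof (rule add_mono[OF _ HN'])
      have "norm (f 0) \<le> Af" using kf by (simp add: Af_def)
      thus "norm (f 0 * deriv g 0) \<le> Af * norm (deriv g 0)" by (simp add: norm_mult mult_right_mono)
    qed
    also have "\<dots> = (norm (deriv g 0) + 1152 * Ag) * S2_norm p f" by (simp add: SA algebra_simps)
    finally show ?thesis using inV by (simp add: V_def)
  qed
  show "(\<forall>f. in_S2 p f \<longrightarrow> in_S2 p (volterra g f)) \<and>
          (\<exists>C. \<forall>f. in_S2 p f \<longrightarrow> S2_norm p (volterra g f) \<le> C * S2_norm p f)"
    using main by blast
qed


end
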